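(* Let $N=((V\cup \{s\},A),\tau)$ be a temporal network with $n=|V|+1\ge 1$ vertices such that $\lambda_{N}(s,v)\ge n$ for all $v\in V$. Then $N$ contains two arc-disjoint spanning $\tau$-respecting $s$-arborescences.
   Context: A temporal network is a pair $N=(D,\tau)$ where $D=(V\cup\{s\},A)$ is a directed graph (parallel arcs allowed, cycles allowed) with root $s$ entered by no arc, and $\tau:A\to\mathbb{N}$. A directed path with arcs $a_1,\dots,a_\ell$ in order is $\tau$-respecting if $\tau(a_1)\le\dots\le\tau(a_\ell)$; $\lambda_N(s,v)$ is the maximum number of pairwise arc-disjoint $\tau$-respecting $(s,v)$-paths. An $s$-arborescence is an acyclic subgraph $F=(V'\cup\{s\},A')$ in which every vertex of $V'$ has in-degree exactly $1$; it is spanning if $V'=V$, and $\tau$-respecting if for every $v\in V'$ the unique $(s,v)$-path in $F$ is $\tau$-respecting. *)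

theory Defs
  imports Main
begin

text \<open>A temporal network: vertex set V plus root s (s not in V), finite arc set A
  (arcs are abstract objects, so parallel arcs are allowed), tail map tl_of,
  head map hd_of, time labels tau. No arc enters s.\<close>

definition temporal_network ::
  "'v set \<Rightarrow> 'v \<Rightarrow> 'a set \<Rightarrow> ('a \<Rightarrow> 'v) \<Rightarrow> ('a \<Rightarrow> 'v) \<Rightarrow> bool" where
  "temporal_network V s A tl_of hd_of \<longleftrightarrow>
     finite V \<and> s \<notin> V \<and> finite A \<and>
     (\<forall>a\<in>A. tl_of a \<in> V \<union> {s} \<and> hd_of a \<in> V)"

definition is_walk ::
  "'a set \<Rightarrow> ('a \<Rightarrow> 'v) \<Rightarrow> ('a \<Rightarrow> 'v) \<Rightarrow> 'v \<Rightarrow> 'a list \<Rightarrow> 'v \<Rightarrow> bool" where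
  "is_walk B tl_of hd_of u p v \<longleftrightarrow>
     p \<noteq> [] \<and> set p \<subseteq> B \<and> tl_of (p ! 0) = u \<and> hd_of (last p) = v \<and>
     (\<forall>i. Suc i < length p \<longrightarrow> hd_of (p ! i) = tl_of (p ! Suc i))"

definition is_path ::
  "'a set \<Rightarrow> ('a \<Rightarrow> 'v) \<Rightarrow> ('a \<Rightarrow> 'v) \<Rightarrow> 'v \<Rightarrow> 'a list \<Rightarrow> 'v \<Rightarrow> bool" where
  "is_path B tl_of hd_of u p v \<longleftrightarrow>
     is_walk B tl_of hd_of u p v \<and> distinct (tl_of (p ! 0) # map hd_of p)"

definition tau_respecting :: "('a \<Rightarrow> nat) \<Rightarrow> 'a list \<Rightarrow> bool" where
  "tau_respecting tau p \<longleftrightarrow> sorted (map tau p)"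

definition temporal_lambda ::
  "'a set \<Rightarrow> ('a \<Rightarrow> 'v) \<Rightarrow> ('a \<Rightarrow> 'v) \<Rightarrow> ('a \<Rightarrow> nat) \<Rightarrow> 'v \<Rightarrow> 'v \<Rightarrow> nat" where
  "temporal_lambda A tl_of hd_of tau s v =
     Max {k. \<exists>P :: 'a list list. length P = k \<and>
              (\<forall>i<k. is_path A tl_of hd_of s (P ! i) v \<and> tau_respecting tau (P ! i)) \<and>
              (\<forall>i<k. \<forall>j<k. i \<noteq> j \<longrightarrow> set (P ! i) \<inter> set (P ! j) = {})}"

definition spanning_tau_arborescence ::
  "'v set \<Rightarrow> 'v \<Rightarrow> 'a set \<Rightarrow> ('a \<Rightarrow> 'v) \<Rightarrow> ('a \<Rightarrow> 'v) \<Rightarrow> ('a \<Rightarrow> nat) \<Rightarrow> 'a set \<Rightarrow> bool" where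
  "spanning_tau_arborescence V s A tl_of hd_of tau F \<longleftrightarrow>
     F \<subseteq> A \<and>
     \<not> (\<exists>u p. is_walk F tl_of hd_of u p u) \<and>
     (\<forall>v\<in>V. card {a\<in>F. hd_of a = v} = 1) \<and>
     (\<forall>v\<in>V. \<forall>p. is_path F tl_of hd_of s p v \<longrightarrow> tau_respecting tau p)"

end

theory Submission
  imports Defs "HOL-Library.Product_Lexorder"
begin

lemma walk_mono:
  "is_walk B tl_of hd_of u p v \<Longrightarrow> set p \<subseteq> B' \<Longrightarrow> is_walk B' tl_of hd_of u p v"
  unfolding is_walk_def by auto

lemma chain_le:
  fixes f :: "nat \<Rightarrow> 'b::order"
  assumes "\<forall>i. Suc i < n \<longrightarrow> f i < f (Suc i)" "j < n"
  shows "f 0 \<le> f j"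
  using assms(2)
proof (induction j)
  case 0 then show ?case by simp
next
  case (Suc j)
  then have "f 0 \<le> f j" by simp
  also have "f j < f (Suc j)" using assms(1) Suc.prems by auto
  finally show ?case by simp
qed

lemma prefix_walk:
  assumes w: "is_walk B tl_of hd_of s p v" and srt: "tau_respecting tau p"
    and ne: "tl_of (last p) \<noteq> s"
  shows "is_walk B tl_of hd_of s (butlast p) (tl_of (last p)) \<and> tau_respecting tau (butlast p)
         \<and> tau (last (butlast p)) \<le> tau (last p) \<and> length (butlast p) < length p"
proof -
  have pne: "p \<noteq> []" using w unfolding is_walk_def by auto
  define q where "q = butlast p"
  have pq: "p = q @ [last p]" using pne q_def by simp
  have qne: "q \<noteq> []"
  proof
    assume "q = []"
    then have "p = [last p]" using pq by simp
    then have "p ! 0 = last p" by (metis nth_Cons_0)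
    then show False using w ne unfolding is_walk_def by auto
  qed
  have lenq: "length p = Suc (length q)" using pq by (metis length_append_singleton)
  have nthq: "\<And>i. i < length q \<Longrightarrow> q ! i = p ! i" using pq by (metis nth_append_left)
  have lastq: "last q = p ! (length q - 1)" using qne nthq by (simp add: last_conv_nth)
  have lastp: "last p = p ! length q" using pq by (metis nth_append_length)
  have "hd_of (last q) = tl_of (last p)"
  proof -
    have c: "\<forall>i. Suc i < length p \<longrightarrow> hd_of (p ! i) = tl_of (p ! Suc i)"
      using w unfolding is_walk_def by auto
    have "Suc (length q - 1) = length q" using qne by simp
    then have "hd_of (p ! (length q - 1)) = tl_of (p ! length q)"
      using c[rule_format, of "length q - 1"] lenq by simp
    then show ?thesis using lastq lastp by simp
  qed
  moreover have "set q \<subseteq> B" using w unfolding is_walk_def q_def by (meson in_set_butlastD subset_iff)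
  moreover have "tl_of (q ! 0) = s" using w qne nthq unfolding is_walk_def by auto
  moreover have "\<forall>i. Suc i < length q \<longrightarrow> hd_of (q ! i) = tl_of (q ! Suc i)"
    using w nthq lenq unfolding is_walk_def by auto
  ultimately have W: "is_walk B tl_of hd_of s q (tl_of (last p))"
    unfolding is_walk_def using qne by auto
  have S: "sorted (map tau p)" using srt unfolding tau_respecting_def by auto
  then have "sorted (map tau q)" using pq by (metis map_append sorted_append)
  moreover have "tau (last q) \<le> tau (last p)"
    using S pq qne by (metis last_in_set map_append list.simps(8,9) sorted_append set_map image_eqI list.set_intros(1))
  ultimately show ?thesis using W lenq unfolding q_def tau_respecting_def by simp
qed

lemma arb_exists:
  assumes net: "\<forall>a\<in>B. tl_of a \<in> V \<union> {s} \<and> hd_of a \<in> V" and sV: "s \<notin> V" and fV: "finite V"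
    and reach: "\<forall>v\<in>V. \<exists>p. is_walk B tl_of hd_of s p v \<and> tau_respecting tau p"
  shows "\<exists>F. F \<subseteq> B \<and> finite F \<and> card F \<le> card V \<and>
     \<not> (\<exists>u p. is_walk F tl_of hd_of u p u) \<and>
     (\<forall>v\<in>V. card {a\<in>F. hd_of a = v} = 1) \<and>
     (\<forall>v\<in>V. \<forall>p. is_path F tl_of hd_of s p v \<longrightarrow> tau_respecting tau p)"
proof -
  define W where "W v = {p. is_walk B tl_of hd_of s p v \<and> tau_respecting tau p}" for v
  define m where "m v = (LEAST x. \<exists>p\<in>W v. x = (tau (last p), length p))" for v
  define pv where "pv v = (SOME p. p \<in> W v \<and> m v = (tau (last p), length p))" for v
  define par where "par v = last (pv v)" for v
  have m_le: "m v \<le> (tau (last p), length p)" if "p \<in> W v" for v p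
    unfolding m_def using that by (intro Least_le) auto
  have pv: "pv v \<in> W v \<and> m v = (tau (last (pv v)), length (pv v))" if vV: "v \<in> V" for v
  proof -
    obtain p where "p \<in> W v" using reach vV W_def by auto
    then have "\<exists>x. \<exists>p\<in>W v. x = (tau (last p), length p)" by auto
    then have "\<exists>p\<in>W v. m v = (tau (last p), length p)" unfolding m_def by (rule LeastI_ex)
    then show ?thesis unfolding pv_def by (metis (mono_tags, lifting) someI_ex)
  qed
  have par1: "par v \<in> B \<and> hd_of (par v) = v \<and> tau (par v) = fst (m v)" if "v \<in> V" for v
    using pv[OF that] unfolding W_def par_def is_walk_def by auto
  have key3: "tl_of (par v) \<in> V \<and> m (tl_of (par v)) < m v" if "v \<in> V" "tl_of (par v) \<noteq> s" for v
  proof -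
    have w: "is_walk B tl_of hd_of s (pv v) v" and t: "tau_respecting tau (pv v)"
      using pv[OF that(1)] W_def by auto
    note P = prefix_walk[OF w t that(2)[unfolded par_def]]
    have "butlast (pv v) \<in> W (tl_of (par v))" using P W_def par_def by auto
    then have "m (tl_of (par v)) \<le> (tau (last (butlast (pv v))), length (butlast (pv v)))"
      by (rule m_le)
    also have "\<dots> < m v" using P pv[OF that(1)] by (simp add: par_def)
    finally have "m (tl_of (par v)) < m v" .
    moreover have "tl_of (par v) \<in> V" using net par1[OF that(1)] that(2) by auto
    ultimately show ?thesis by simp
  qed
  have step: "tau (par w) \<le> tau (par v) \<and> m w < m v" if "v \<in> V" "tl_of (par v) = w" "w \<in> V" for v w
  proof -
    have "m w < m v" using key3[OF that(1)] that sV by auto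
    then have "fst (m w) \<le> fst (m v)" by (cases "m w", cases "m v") auto
    then show ?thesis using par1 that \<open>m w < m v\<close> by auto
  qed
  define F where "F = par ` V"
  have FB: "F \<subseteq> B" using par1 F_def by auto
  have inF: "a = par (hd_of a) \<and> hd_of a \<in> V" if "a \<in> F" for a
    using that par1 F_def by auto
  have fin: "finite F" using fV F_def by auto
  have card: "card F \<le> card V" unfolding F_def by (rule card_image_le[OF fV])
  have indeg: "\<forall>v\<in>V. card {a\<in>F. hd_of a = v} = 1"
  proof
    fix v assume v: "v \<in> V"
    have "{a\<in>F. hd_of a = v} = {par v}" using inF v par1 F_def by auto
    then show "card {a\<in>F. hd_of a = v} = 1" by simp
  qed
  have consec: "tau (p ! i) \<le> tau (p ! Suc i) \<and> m (hd_of (p ! i)) < m (hd_of (p ! Suc i))"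
    if "set p \<subseteq> F" "Suc i < length p" "hd_of (p ! i) = tl_of (p ! Suc i)" for p i
  proof -
    have a: "p ! i \<in> F" "p ! Suc i \<in> F" using that by auto
    have "hd_of (p ! i) \<in> V" using inF a by auto
    then show ?thesis using step[of "hd_of (p ! Suc i)" "hd_of (p ! i)"] inF a that(3) by metis
  qed
  have taup: "\<forall>v\<in>V. \<forall>p. is_path F tl_of hd_of s p v \<longrightarrow> tau_respecting tau p"
  proof (intro ballI allI impI)
    fix v p assume "is_path F tl_of hd_of s p v"
    then have w: "is_walk F tl_of hd_of s p v" unfolding is_path_def by auto
    have "sorted (map tau p)"
      unfolding sorted_iff_nth_Suc using consec w unfolding is_walk_def by auto
    then show "tau_respecting tau p" unfolding tau_respecting_def .
  qed
  have acyc: "\<not> (\<exists>u p. is_walk F tl_of hd_of u p u)"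
  proof
    assume "\<exists>u p. is_walk F tl_of hd_of u p u"
    then obtain u p where w: "is_walk F tl_of hd_of u p u" by auto
    have pne: "p \<noteq> []" and sp: "set p \<subseteq> F" using w unfolding is_walk_def by auto
    define f where "f i = m (hd_of (p ! i))" for i
    have "\<forall>i. Suc i < length p \<longrightarrow> f i < f (Suc i)"
      using consec[OF sp] w unfolding is_walk_def f_def by auto
    then have le: "f 0 \<le> f (length p - 1)" by (rule chain_le) (use pne in auto)
    have lastp: "hd_of (p ! (length p - 1)) = u" using w pne unfolding is_walk_def by (simp add: last_conv_nth)
    have a0: "p ! 0 \<in> F" using sp pne by auto
    have tl0: "tl_of (p ! 0) = u" using w unfolding is_walk_def by auto
    have uV: "u \<in> V" using lastp inF sp pne by (metis One_nat_def diff_less length_greater_0_conv lessI nth_mem subsetD)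
    have "m u < f 0" using step[of "hd_of (p ! 0)" u] inF[OF a0] tl0 uV unfolding f_def by metis
    then show False using le lastp unfolding f_def by simp
  qed
  show ?thesis using FB fin card acyc indeg taup by blast
qed

lemma avoid:
  assumes fA: "finite A" and lam: "temporal_lambda A tl_of hd_of tau s v \<ge> c + 1"
    and fX: "finite X" and cX: "card X \<le> c"
  shows "\<exists>p. is_walk (A - X) tl_of hd_of s p v \<and> tau_respecting tau p"
proof -
  define S where "S = {k. \<exists>P :: 'a list list. length P = k \<and>
              (\<forall>i<k. is_path A tl_of hd_of s (P ! i) v \<and> tau_respecting tau (P ! i)) \<and>
              (\<forall>i<k. \<forall>j<k. i \<noteq> j \<longrightarrow> set (P ! i) \<inter> set (P ! j) = {})}"
  have bound: "k \<le> card A" if kS: "k \<in> S" for k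
  proof -
    obtain P where P: "length P = k" "\<forall>i<k. is_path A tl_of hd_of s (P ! i) v"
      "\<forall>i<k. \<forall>j<k. i \<noteq> j \<longrightarrow> set (P ! i) \<inter> set (P ! j) = {}"
      using kS S_def by auto
    have ne: "\<forall>i<k. set (P ! i) \<noteq> {} \<and> set (P ! i) \<subseteq> A"
      using P(2) unfolding is_path_def is_walk_def by auto
    have "card (\<Union>i\<in>{..<k}. set (P ! i)) = (\<Sum>i\<in>{..<k}. card (set (P ! i)))"
      by (rule card_UN_disjoint) (use P(3) in auto)
    also have "\<dots> \<ge> (\<Sum>i\<in>{..<k}. 1)"
      by (rule sum_mono) (use ne in \<open>auto simp: Suc_le_eq card_gt_0_iff\<close>)
    finally have "k \<le> card (\<Union>i\<in>{..<k}. set (P ! i))" by simp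
    also have "\<dots> \<le> card A" by (rule card_mono[OF fA]) (use ne in auto)
    finally show ?thesis .
  qed
  have finS: "finite S" by (rule finite_subset[of S "{..card A}"]) (use bound in auto)
  have "0 \<in> S" unfolding S_def by (rule CollectI, rule exI[of _ "[]"]) simp
  then have "Max S \<in> S" using finS by (intro Max_in) auto
  moreover have "Max S \<ge> c + 1" using lam unfolding temporal_lambda_def S_def by simp
  ultimately obtain P where P: "length P = Max S"
    "\<forall>i<Max S. is_path A tl_of hd_of s (P ! i) v \<and> tau_respecting tau (P ! i)"
    "\<forall>i<Max S. \<forall>j<Max S. i \<noteq> j \<longrightarrow> set (P ! i) \<inter> set (P ! j) = {}"
    unfolding S_def by blast
  define k where "k = Max S"
  have "\<exists>i<k. set (P ! i) \<inter> X = {}"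
  proof (rule ccontr)
    assume "\<not> ?thesis"
    then have h: "\<forall>i<k. \<exists>x. x \<in> set (P ! i) \<inter> X" by auto
    define f where "f i = (SOME x. x \<in> set (P ! i) \<inter> X)" for i
    have fi: "f i \<in> set (P ! i) \<inter> X" if "i < k" for i
      using h[rule_format, OF that] unfolding f_def by (rule someI_ex)
    have "inj_on f {..<k}"
    proof
      fix i j assume "i \<in> {..<k}" "j \<in> {..<k}" "f i = f j"
      then have ij: "i < k" "j < k" "f i = f j" by auto
      then have "f i \<in> set (P ! i)" "f i \<in> set (P ! j)" using fi[of i] fi[of j] by auto
      show "i = j"
      proof (rule ccontr)
        assume "i \<noteq> j"
        then have "set (P ! i) \<inter> set (P ! j) = {}" using ij P(3) unfolding k_def by simp
        then show False using \<open>f i \<in> set (P ! i)\<close> \<open>f i \<in> set (P ! j)\<close> by auto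
      qed
    qed
    moreover have "f ` {..<k} \<subseteq> X" using fi by auto
    ultimately have "card {..<k} \<le> card X" using fX by (intro card_inj_on_le)
    then show False using cX \<open>Max S \<ge> c + 1\<close> k_def by simp
  qed
  then obtain i where i: "i < k" "set (P ! i) \<inter> X = {}" by auto
  have wA: "is_walk A tl_of hd_of s (P ! i) v" and tr: "tau_respecting tau (P ! i)"
    using P(2) i(1) k_def unfolding is_path_def by auto
  have "set (P ! i) \<subseteq> A" using wA unfolding is_walk_def by simp
  then have "set (P ! i) \<subseteq> A - X" using i(2) by blast
  then have "is_walk (A - X) tl_of hd_of s (P ! i) v" by (rule walk_mono[OF wA])
  then show ?thesis using tr by blast
qed

theorem mainTheorem9:
  fixes V :: "'v set" and s :: 'v and A :: "'a set"
    and tl_of hd_of :: "'a \<Rightarrow> 'v" and tau :: "'a \<Rightarrow> nat"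
  assumes "temporal_network V s A tl_of hd_of"
    and "\<forall>v\<in>V. temporal_lambda A tl_of hd_of tau s v \<ge> card V + 1"
  shows "\<exists>F1 F2. spanning_tau_arborescence V s A tl_of hd_of tau F1 \<and>
                 spanning_tau_arborescence V s A tl_of hd_of tau F2 \<and> F1 \<inter> F2 = {}"
proof -
  have net: "finite V" "s \<notin> V" "finite A" "\<forall>a\<in>A. tl_of a \<in> V \<union> {s} \<and> hd_of a \<in> V"
    using assms(1) unfolding temporal_network_def by auto
  have r1: "\<forall>v\<in>V. \<exists>p. is_walk (A - {}) tl_of hd_of s p v \<and> tau_respecting tau p"
  proof
    fix v assume "v \<in> V"
    then show "\<exists>p. is_walk (A - {}) tl_of hd_of s p v \<and> tau_respecting tau p"
      using avoid[OF net(3), of "card V" tl_of hd_of tau s v "{}"] assms(2) by auto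
  qed
  obtain F1 where F1: "F1 \<subseteq> A" "finite F1" "card F1 \<le> card V"
     "\<not> (\<exists>u p. is_walk F1 tl_of hd_of u p u)"
     "\<forall>v\<in>V. card {a\<in>F1. hd_of a = v} = 1"
     "\<forall>v\<in>V. \<forall>p. is_path F1 tl_of hd_of s p v \<longrightarrow> tau_respecting tau p"
    using arb_exists[of A tl_of V s hd_of tau] net r1 by auto
  have r2: "\<forall>v\<in>V. \<exists>p. is_walk (A - F1) tl_of hd_of s p v \<and> tau_respecting tau p"
  proof
    fix v assume "v \<in> V"
    then show "\<exists>p. is_walk (A - F1) tl_of hd_of s p v \<and> tau_respecting tau p"
      using avoid[OF net(3), of "card V" tl_of hd_of tau s v F1] assms(2) F1(2,3) by auto
  qed
  obtain F2 where F2: "F2 \<subseteq> A - F1" "finite F2" "card F2 \<le> card V"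
     "\<not> (\<exists>u p. is_walk F2 tl_of hd_of u p u)"
     "\<forall>v\<in>V. card {a\<in>F2. hd_of a = v} = 1"
     "\<forall>v\<in>V. \<forall>p. is_path F2 tl_of hd_of s p v \<longrightarrow> tau_respecting tau p"
    using arb_exists[of "A - F1" tl_of V s hd_of tau] net r2 by auto
  show ?thesis unfolding spanning_tau_arborescence_def
    by (rule exI[of _ F1], rule exI[of _ F2]) (use F1 F2 in auto)
qed

end
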